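(* Let $(c_1,\dots,c_m)\in\mathbb{Z}^m$ be a quiddity cycle, with indices read cyclically modulo $m$. Then at least one of the following holds: (0) $m<4$ and $(c_1,\dots,c_m)\in\{(0,0),(1,1,1)\}$. (1) There is $k$ with $c_k=1$ such that $(c_1,\dots,c_{k-2},c_{k-1}-1,c_{k+1}-1,c_{k+2},\dots,c_m)$ is a quiddity cycle of length $m-1$. (2) $m$ is odd and there is $k$ with $c_k=0$ such that $(-c_1,\dots,-c_{k-2},-c_{k-1}-c_{k+1},-c_{k+2},\dots,-c_m)$ is a quiddity cycle of length $m-2$. (3) $m$ is even and there is $k$ with $c_k=-1$ such that $(-c_1,\dots,-c_{k-2},-c_{k-1}-1,-c_{k+1}-1,-c_{k+2},\dots,-c_m)$ is a quiddity cycle of length $m-1$. (4) There are $j,k$, not cyclically adjacent, with $c_j=c_k=0$, and the following sequence is a quiddity cycle of length $m-4$: - if $j$ and $k$ are at cyclic distance greater than $2$: $(c_1,\dots,c_{j-2},c_{j-1}+c_{j+1},c_{j+2},\dots,c_{k-2},c_{k-1}+c_{k+1},c_{k+2},\dots,c_m)$; - if (after possibly swapping $j,k$) $j+1=k-1$: $(c_1,\dots,c_{j-2},c_{j-1}+c_{j+1}+c_{k+1},c_{k+2},\dots,c_m)$. (5) There are $j,k$, not cyclically adjacent, with $c_j=c_k=-1$, and the following sequence is a quiddity cycle of length $m-2$: - if $j$ and $k$ are at cyclic distance greater than $2$: $(c_1,\dots,c_{j-2},c_{j-1}+1,c_{j+1}+1,c_{j+2},\dots,c_{k-2},c_{k-1}+1,c_{k+1}+1,c_{k+2},\dots,c_m)$;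 - if (after possibly swapping $j,k$) $j+1=k-1$: $(c_1,\dots,c_{j-2},c_{j-1}+1,c_{j+1}+2,c_{k+1}+1,c_{k+2},\dots,c_m)$.
   Context: $\eta(c)=\begin{pmatrix}c&-1\\1&0\end{pmatrix}$. A quiddity cycle over $\mathbb{Z}$ is $(c_1,\dots,c_m)\in\mathbb{Z}^m$ with $\eta(c_1)\cdots\eta(c_m)=-I$. *)

theory Defs
  imports "HOL-Analysis.Analysis"
begin

definition eta :: "int \<Rightarrow> int^2^2" where
  "eta c = vector [vector [c, -1], vector [1, 0]]"

definition eta_prod :: "int list \<Rightarrow> int^2^2" where
  "eta_prod cs = foldr (\<lambda>c M. eta c ** M) cs (mat 1)"

definition quiddity_cycle :: "int list \<Rightarrow> bool" where
  "quiddity_cycle cs \<longleftrightarrow> eta_prod cs = - mat 1"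

text \<open>Positions are 0-based: the list c = [c_0, ..., c_(m-1)], indices mod m.
  For a position k, rot_at c k = rotate ((k + m - 1) mod m) c
  = [c_(k-1), c_k, c_(k+1), c_(k+2), ..., c_(k-2)] (cyclically).
  The reduced sequences below are given up to this cyclic rotation.\<close>
definition rot_at :: "int list \<Rightarrow> nat \<Rightarrow> int list" where
  "rot_at c k = rotate ((k + length c - 1) mod length c) c"

text \<open>(1): (c_(k-1) - 1, c_(k+1) - 1, c_(k+2), ..., c_(k-2))\<close>
definition red1 :: "int list \<Rightarrow> nat \<Rightarrow> int list" where
  "red1 c k = (let r = rot_at c k in (r!0 - 1) # (r!2 - 1) # drop 3 r)"

text \<open>(2): (-c_(k-1) - c_(k+1), -c_(k+2), ..., -c_(k-2))\<close>
definition red2 :: "int list \<Rightarrow> nat \<Rightarrow> int list" where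
  "red2 c k = (let r = rot_at c k in (- r!0 - r!2) # map uminus (drop 3 r))"

text \<open>(3): (-c_(k-1) - 1, -c_(k+1) - 1, -c_(k+2), ..., -c_(k-2))\<close>
definition red3 :: "int list \<Rightarrow> nat \<Rightarrow> int list" where
  "red3 c k = (let r = rot_at c k in (- r!0 - 1) # (- r!2 - 1) # map uminus (drop 3 r))"

definition cdist :: "nat \<Rightarrow> nat \<Rightarrow> nat \<Rightarrow> nat" where
  "cdist m j k = (k + m - j) mod m"

text \<open>(4) with d = cdist m j k, 3 <= d <= m-3 (cyclic distance > 2):
  (c_(j-1)+c_(j+1), c_(j+2), ..., c_(k-2), c_(k-1)+c_(k+1), c_(k+2), ..., c_(j-2)).
  In r = rot_at c j, c_(j+i) sits at position i+1, so c_(k+i) at d+1+i.\<close>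
definition red4_far :: "int list \<Rightarrow> nat \<Rightarrow> nat \<Rightarrow> int list" where
  "red4_far c j k = (let r = rot_at c j; d = cdist (length c) j k in
     (r!0 + r!2) # take (d - 3) (drop 3 r) @ [r!d + r!(d+2)] @ drop (d+3) r)"

text \<open>(4) with k = j + 2 (mod m), i.e. j+1 = k-1:
  (c_(j-1)+c_(j+1)+c_(k+1), c_(k+2), ..., c_(j-2)).\<close>
definition red4_near :: "int list \<Rightarrow> nat \<Rightarrow> int list" where
  "red4_near c j = (let r = rot_at c j in (r!0 + r!2 + r!4) # drop 5 r)"

text \<open>(5) far case:
  (c_(j-1)+1, c_(j+1)+1, c_(j+2), ..., c_(k-2), c_(k-1)+1, c_(k+1)+1, c_(k+2), ..., c_(j-2)).\<close>
definition red5_far :: "int list \<Rightarrow> nat \<Rightarrow> nat \<Rightarrow> int list" where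
  "red5_far c j k = (let r = rot_at c j; d = cdist (length c) j k in
     (r!0 + 1) # (r!2 + 1) # take (d - 3) (drop 3 r) @ [r!d + 1, r!(d+2) + 1] @ drop (d+3) r)"

text \<open>(5) near case (k = j + 2 mod m):
  (c_(j-1)+1, c_(j+1)+2, c_(k+1)+1, c_(k+2), ..., c_(j-2)).\<close>
definition red5_near :: "int list \<Rightarrow> nat \<Rightarrow> int list" where
  "red5_near c j = (let r = rot_at c j in (r!0 + 1) # (r!2 + 2) # (r!4 + 1) # drop 5 r)"

end

theory Submission
  imports Defs
begin


datatype m2 = M int int int int

fun mm :: "m2 \<Rightarrow> m2 \<Rightarrow> m2" where
  "mm (M a b c d) (M e f g h) = M (a*e+b*g) (a*f+b*h) (c*e+d*g) (c*f+d*h)"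

definition et :: "int \<Rightarrow> m2" where "et x = M x (-1) 1 0"

definition ep :: "int list \<Rightarrow> m2" where
  "ep cs = foldr (\<lambda>c X. mm (et c) X) cs (M 1 0 0 1)"

fun tom :: "m2 \<Rightarrow> int^2^2" where
  "tom (M a b c d) = vector [vector [a, b], vector [c, d]]"

lemma two_cases: "(i::2) = 1 \<or> i = 2"
  using exhaust_2 by blast

lemma tom_inj: "tom X = tom Y \<longleftrightarrow> X = Y"
proof (cases X; cases Y)
  fix a b c d e f g h assume [simp]: "X = M a b c d" "Y = M e f g h"
  show ?thesis
  proof
    assume "tom X = tom Y"
    hence "tom X $ 1 $ 1 = tom Y $ 1 $ 1" "tom X $ 1 $ 2 = tom Y $ 1 $ 2"
          "tom X $ 2 $ 1 = tom Y $ 2 $ 1" "tom X $ 2 $ 2 = tom Y $ 2 $ 2" by auto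
    thus "X = Y" by simp
  qed simp
qed

lemma tom_mult: "tom X ** tom Y = tom (mm X Y)"
  apply (cases X; cases Y)
  apply (simp add: matrix_matrix_mult_def vec_eq_iff forall_2 sum_2)
  done

lemma tom_one: "mat 1 = tom (M 1 0 0 1)"
  by (simp add: mat_def vec_eq_iff forall_2)

lemma tom_mone: "- mat 1 = tom (M (-1) 0 0 (-1))"
  by (simp add: mat_def vec_eq_iff forall_2)

lemma eta_tom: "eta c = tom (et c)"
  by (simp add: eta_def et_def)

lemma eta_prod_ep: "eta_prod cs = tom (ep cs)"
  by (induction cs) (simp_all add: eta_prod_def ep_def tom_one eta_tom tom_mult)

lemma qc_ep: "quiddity_cycle cs \<longleftrightarrow> ep cs = M (-1) 0 0 (-1)"
  unfolding quiddity_cycle_def eta_prod_ep tom_mone tom_inj ..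

definition I' :: m2 where "I' = M (-1) 0 0 (-1)"
fun neg :: "m2 \<Rightarrow> m2" where "neg (M a b c d) = M (-a) (-b) (-c) (-d)"
fun dconj :: "m2 \<Rightarrow> m2" where "dconj (M a b c d) = M a (-b) (-c) d"
fun det2 :: "m2 \<Rightarrow> int" where "det2 (M a b c d) = a*d - b*c"

lemma qc: "quiddity_cycle cs \<longleftrightarrow> ep cs = I'"
  using qc_ep I'_def by simp

lemma ep_Nil[simp]: "ep [] = M 1 0 0 1" by (simp add: ep_def)
lemma ep_Cons[simp]: "ep (x#xs) = mm (et x) (ep xs)" by (simp add: ep_def)

lemma mm_assoc: "mm (mm X Y) Z = mm X (mm Y Z)"
  by (cases X; cases Y; cases Z) (simp add: algebra_simps)
lemma mm_one: "mm X (M 1 0 0 1) = X" by (cases X) simp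
lemma mm_one_left[simp]: "mm (M 1 0 0 1) X = X" by (cases X) simp
lemma mm_neg: "mm X (neg Y) = neg (mm X Y)" by (cases X; cases Y) simp
lemma neg_neg[simp]: "neg (neg X) = X" by (cases X) simp
lemma neg_I'[simp]: "neg X = I' \<longleftrightarrow> X = M 1 0 0 1" by (cases X) (auto simp: I'_def)

lemma ep_append: "ep (xs @ ys) = mm (ep xs) (ep ys)"
  by (induction xs) (simp_all add: mm_assoc)

lemma det_ep: "det2 (ep xs) = 1"
proof (induction xs)
  case (Cons x xs) thus ?case by (cases "ep xs") (simp add: et_def algebra_simps)
qed simp

lemma comm_I': assumes "mm X Y = I'" "det2 X = 1" shows "mm Y X = I'"
proof (cases X; cases Y)
  fix a b c d e f g h assume [simp]: "X = M a b c d" "Y = M e f g h"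
  from assms have e: "a*e+b*g = -1" "a*f+b*h = 0" "c*e+d*g=0" "c*f+d*h = -1" "a*d-b*c=1"
    by (auto simp: I'_def)
  have "e = -d" using e by algebra
  moreover have "f = b" using e by algebra
  moreover have "g = c" using e by algebra
  moreover have "h = -a" using e by algebra
  ultimately show ?thesis using e by (simp add: I'_def algebra_simps)
qed

lemma ep_swap: "ep (xs @ ys) = I' \<Longrightarrow> ep (ys @ xs) = I'"
  by (metis comm_I' det_ep ep_append)

lemma qc_rotate: "quiddity_cycle c \<Longrightarrow> quiddity_cycle (rotate n c)"
  by (metis ep_swap qc rotate_drop_take append_take_drop_id)

lemma red0: "ep (a#0#b#xs) = neg (ep ((a+b)#xs))"
  by (cases "ep xs") (simp add: et_def algebra_simps)
lemma red1': "ep (a#1#b#xs) = ep ((a-1)#(b-1)#xs)"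
  by (cases "ep xs") (simp add: et_def algebra_simps)
lemma redm1: "ep (a#(-1)#b#xs) = neg (ep ((a+1)#(b+1)#xs))"
  by (cases "ep xs") (simp add: et_def algebra_simps)

lemma ep_uminus: "ep (map uminus xs) = (if even (length xs) then dconj (ep xs) else neg (dconj (ep xs)))"
proof (induction xs)
  case (Cons x xs) thus ?case by (cases "ep xs") (auto simp: et_def algebra_simps)
qed simp

lemma growth: "xs \<noteq> [] \<Longrightarrow> \<forall>x\<in>set xs. 2 \<le> \<bar>x\<bar> \<Longrightarrow> ep xs = M a b c d \<Longrightarrow> \<bar>a\<bar> > \<bar>c\<bar> \<and> \<bar>c\<bar> \<ge> 1"
proof (induction xs arbitrary: a b c d)
  case Nil thus ?case by simp
next
  case (Cons x xs)
  show ?case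
  proof (cases "xs = []")
    case True thus ?thesis using Cons.prems by (auto simp: et_def)
  next
    case False
    obtain e f g h where E: "ep xs = M e f g h" by (cases "ep xs")
    with Cons False have IH: "\<bar>e\<bar> > \<bar>g\<bar>" "\<bar>g\<bar> \<ge> 1" by auto
    from Cons.prems E have ac: "a = x*e - g" "c = e" by (auto simp: et_def)
    have x2: "2 \<le> \<bar>x\<bar>" using Cons.prems by simp
    have "\<bar>x*e\<bar> \<ge> 2*\<bar>e\<bar>" using x2 by (simp add: abs_mult mult_right_mono)
    hence "\<bar>x*e - g\<bar> > \<bar>e\<bar>" using IH by linarith
    thus ?thesis using ac IH by simp
  qed
qed

lemma rot_len[simp]: "length (rot_at c k) = length c"
  by (simp add: rot_at_def)

lemma rot_nth: "k < length c \<Longrightarrow> i < length c \<Longrightarrow> rot_at c k ! i = c ! ((k + length c - 1 + i) mod length c)"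
  by (simp add: rot_at_def nth_rotate mod_add_left_eq)

lemma rot_nth_d: assumes "j < length c" "k < length c" "cdist (length c) j k + 1 < length c"
  shows "rot_at c j ! (cdist (length c) j k + 1) = c ! k"
proof -
  let ?m = "length c"
  have e: "j + ?m - 1 + (cdist ?m j k + 1) = j + ?m + (k + ?m - j) mod ?m"
    using assms by (simp add: cdist_def)
  have "(j + ?m - 1 + (cdist ?m j k + 1)) mod ?m = (j + ?m + (k + ?m - j) mod ?m) mod ?m"
    unfolding e ..
  also have "\<dots> = (j + ?m + (k + ?m - j)) mod ?m" by (simp add: mod_add_right_eq)
  also have "j + ?m + (k + ?m - j) = k + ?m * 2" using assms by simp
  also have "(k + ?m * 2) mod ?m = k" using assms by simp
  finally show ?thesis using assms by (simp add: rot_nth)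
qed

lemma rot_nth_1: assumes "k < length c" "2 \<le> length c" shows "rot_at c k ! 1 = c ! k"
proof -
  have e: "k + length c - 1 + 1 = k + length c" using assms by simp
  have "(k + length c - 1 + 1) mod length c = k" unfolding e using assms by simp
  thus ?thesis using assms by (simp add: rot_nth)
qed

lemma l3: "3 \<le> length xs \<Longrightarrow> xs = xs!0 # xs!1 # xs!2 # drop 3 xs"
  by (cases xs; cases "tl xs"; cases "tl (tl xs)") (auto simp: numeral_eq_Suc)

lemma l5: "5 \<le> length xs \<Longrightarrow> xs = xs!0 # xs!1 # xs!2 # xs!3 # xs!4 # drop 5 xs"
  by (cases xs; cases "tl xs"; cases "tl (tl xs)"; cases "tl (tl (tl xs))"; cases "tl (tl (tl (tl xs)))") (auto simp: numeral_eq_Suc)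

lemma lfar: assumes "3 \<le> d" "d + 3 \<le> length r"
  shows "r = r!0 # r!1 # r!2 # (take (d-3) (drop 3 r) @ r!d # r!(d+1) # r!(d+2) # drop (d+3) r)"
proof -
  have a: "r = r!0 # r!1 # r!2 # drop 3 r" using assms by (intro l3) simp
  have b: "drop 3 r = take (d-3) (drop 3 r) @ drop d r"
    using assms by (metis append_take_drop_id drop_drop le_add_diff_inverse2)
  have "drop d r = drop d r ! 0 # drop d r ! 1 # drop d r ! 2 # drop 3 (drop d r)"
    using assms by (intro l3) simp
  hence c: "drop d r = r!d # r!(d+1) # r!(d+2) # drop (d+3) r"
    using assms by (simp add: add.commute)
  show ?thesis using a b c by metis
qed

lemma qc_rot_at: "quiddity_cycle c \<Longrightarrow> quiddity_cycle (rot_at c k)"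
  by (simp add: rot_at_def qc_rotate)

lemma L1: assumes "quiddity_cycle c" "3 \<le> length c" "k < length c" "c!k = 1"
  shows "quiddity_cycle (red1 c k) \<and> length (red1 c k) = length c - 1"
proof -
  define r where "r = rot_at c k"
  have q: "ep r = I'" using assms qc_rot_at qc r_def by blast
  have "r = r!0 # r!1 # r!2 # drop 3 r" using assms r_def by (intro l3) simp
  moreover have "r!1 = 1" using assms r_def rot_nth_1 by simp
  ultimately have "ep r = ep ((r!0 - 1) # (r!2 - 1) # drop 3 r)" by (metis red1')
  moreover have "length r = length c" using r_def by simp
  ultimately show ?thesis using q assms by (simp add: red1_def r_def[symmetric] qc)
qed

lemma L2: assumes "quiddity_cycle c" "3 \<le> length c" "k < length c" "c!k = 0" "odd (length c)"
  shows "quiddity_cycle (red2 c k) \<and> length (red2 c k) = length c - 2"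
proof -
  define r where "r = rot_at c k"
  have q: "ep r = I'" using assms qc_rot_at qc r_def by blast
  have "r = r!0 # r!1 # r!2 # drop 3 r" using assms r_def by (intro l3) simp
  moreover have "r!1 = 0" using assms r_def rot_nth_1 by simp
  ultimately have "ep r = neg (ep ((r!0 + r!2) # drop 3 r))" by (metis red0)
  hence e: "ep ((r!0 + r!2) # drop 3 r) = M 1 0 0 1" using q by (metis neg_I')
  have "red2 c k = map uminus ((r!0 + r!2) # drop 3 r)" by (simp add: red2_def r_def[symmetric])
  moreover have "odd (length ((r!0 + r!2) # drop 3 r))" using assms r_def by auto
  ultimately have "ep (red2 c k) = I'" using e by (simp only: ep_uminus) (simp add: I'_def)
  thus ?thesis using assms by (simp add: red2_def qc Let_def)
qed

lemma L3: assumes "quiddity_cycle c" "3 \<le> length c" "k < length c" "c!k = -1" "even (length c)"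
  shows "quiddity_cycle (red3 c k) \<and> length (red3 c k) = length c - 1"
proof -
  define r where "r = rot_at c k"
  have q: "ep r = I'" using assms qc_rot_at qc r_def by blast
  have "r = r!0 # r!1 # r!2 # drop 3 r" using assms r_def by (intro l3) simp
  moreover have "r!1 = -1" using assms r_def rot_nth_1 by simp
  ultimately have "ep r = neg (ep ((r!0 + 1) # (r!2 + 1) # drop 3 r))" by (metis redm1)
  hence e: "ep ((r!0 + 1) # (r!2 + 1) # drop 3 r) = M 1 0 0 1" using q by (metis neg_I')
  have "red3 c k = map uminus ((r!0 + 1) # (r!2 + 1) # drop 3 r)" by (simp add: red3_def r_def[symmetric])
  moreover have "odd (length ((r!0 + 1) # (r!2 + 1) # drop 3 r))" using assms r_def by auto
  ultimately have "ep (red3 c k) = I'" using e by (simp only: ep_uminus) (simp add: I'_def)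
  thus ?thesis using assms by (simp add: red3_def qc Let_def)
qed

lemma L4far: assumes "quiddity_cycle c" "j < length c" "k < length c" "c!j = 0" "c!k = 0"
  "3 \<le> cdist (length c) j k" "cdist (length c) j k + 3 \<le> length c"
  shows "quiddity_cycle (red4_far c j k) \<and> length (red4_far c j k) = length c - 4"
proof -
  define r where "r = rot_at c j"
  define d where "d = cdist (length c) j k"
  have q: "ep r = I'" using assms qc_rot_at qc r_def by blast
  have R: "r = r!0 # r!1 # r!2 # (take (d-3) (drop 3 r) @ r!d # r!(d+1) # r!(d+2) # drop (d+3) r)"
    using assms r_def d_def by (intro lfar) auto
  have "r!1 = 0" using assms r_def rot_nth_1 by simp
  moreover have "r!(d+1) = 0" using assms r_def d_def rot_nth_d by simp
  ultimately have "ep r = neg (ep ((r!0 + r!2) # (take (d-3) (drop 3 r) @ r!d # 0 # r!(d+2) # drop (d+3) r)))"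
    using R by (metis red0)
  also have "\<dots> = neg (mm (ep ((r!0 + r!2) # take (d-3) (drop 3 r))) (ep (r!d # 0 # r!(d+2) # drop (d+3) r)))"
    by (metis append_Cons ep_append)
  also have "\<dots> = mm (ep ((r!0 + r!2) # take (d-3) (drop 3 r))) (ep ((r!d + r!(d+2)) # drop (d+3) r))"
    by (simp only: red0 mm_neg neg_neg)
  also have "\<dots> = ep (red4_far c j k)"
    by (simp add: red4_far_def r_def[symmetric] d_def[symmetric] ep_append mm_assoc)
  finally have "quiddity_cycle (red4_far c j k)" using q qc by simp
  moreover have "length (red4_far c j k) = length c - 4"
    using assms by (simp add: red4_far_def Let_def d_def[symmetric])
  ultimately show ?thesis by simp
qed

lemma L5far: assumes "quiddity_cycle c" "j < length c" "k < length c" "c!j = -1" "c!k = -1"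
  "3 \<le> cdist (length c) j k" "cdist (length c) j k + 3 \<le> length c"
  shows "quiddity_cycle (red5_far c j k) \<and> length (red5_far c j k) = length c - 2"
proof -
  define r where "r = rot_at c j"
  define d where "d = cdist (length c) j k"
  have q: "ep r = I'" using assms qc_rot_at qc r_def by blast
  have R: "r = r!0 # r!1 # r!2 # (take (d-3) (drop 3 r) @ r!d # r!(d+1) # r!(d+2) # drop (d+3) r)"
    using assms r_def d_def by (intro lfar) auto
  have "r!1 = -1" using assms r_def rot_nth_1 by simp
  moreover have "r!(d+1) = -1" using assms r_def d_def rot_nth_d by simp
  ultimately have "ep r = neg (ep ((r!0 + 1) # (r!2 + 1) # (take (d-3) (drop 3 r) @ r!d # (-1) # r!(d+2) # drop (d+3) r)))"
    using R by (metis redm1)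
  also have "\<dots> = neg (mm (ep ((r!0 + 1) # (r!2 + 1) # take (d-3) (drop 3 r))) (ep (r!d # (-1) # r!(d+2) # drop (d+3) r)))"
    by (metis append_Cons ep_append)
  also have "\<dots> = mm (ep ((r!0 + 1) # (r!2 + 1) # take (d-3) (drop 3 r))) (ep ((r!d + 1) # (r!(d+2) + 1) # drop (d+3) r))"
    by (simp only: redm1 mm_neg neg_neg)
  also have "\<dots> = ep (red5_far c j k)"
    by (simp add: red5_far_def r_def[symmetric] d_def[symmetric] ep_append mm_assoc)
  finally have "quiddity_cycle (red5_far c j k)" using q qc by simp
  moreover have "length (red5_far c j k) = length c - 2"
    using assms by (simp add: red5_far_def Let_def d_def[symmetric])
  ultimately show ?thesis by simp
qed

lemma L4near: assumes "quiddity_cycle c" "j < length c" "k < length c" "c!j = 0" "c!k = 0"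
  "cdist (length c) j k = 2" "5 \<le> length c"
  shows "quiddity_cycle (red4_near c j) \<and> length (red4_near c j) = length c - 4"
proof -
  define r where "r = rot_at c j"
  have q: "ep r = I'" using assms qc_rot_at qc r_def by blast
  have R: "r = r!0 # r!1 # r!2 # r!3 # r!4 # drop 5 r" using assms r_def by (intro l5) simp
  have "r!1 = 0" using assms r_def rot_nth_1 by simp
  moreover have "r!3 = 0" using assms r_def rot_nth_d[of j c k] by simp
  ultimately have "ep r = neg (ep ((r!0 + r!2) # 0 # r!4 # drop 5 r))" using R by (metis red0)
  also have "\<dots> = ep ((r!0 + r!2 + r!4) # drop 5 r)" by (simp only: red0 neg_neg)
  finally have "quiddity_cycle (red4_near c j)" using q qc by (simp add: red4_near_def r_def[symmetric])
  thus ?thesis using assms by (simp add: red4_near_def Let_def)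
qed

lemma L5near: assumes "quiddity_cycle c" "j < length c" "k < length c" "c!j = -1" "c!k = -1"
  "cdist (length c) j k = 2" "5 \<le> length c"
  shows "quiddity_cycle (red5_near c j) \<and> length (red5_near c j) = length c - 2"
proof -
  define r where "r = rot_at c j"
  have q: "ep r = I'" using assms qc_rot_at qc r_def by blast
  have R: "r = r!0 # r!1 # r!2 # r!3 # r!4 # drop 5 r" using assms r_def by (intro l5) simp
  have "r!1 = -1" using assms r_def rot_nth_1 by simp
  moreover have "r!3 = -1" using assms r_def rot_nth_d[of j c k] by simp
  ultimately have "ep r = neg (ep ((r!0 + 1) # (r!2 + 1) # (-1) # r!4 # drop 5 r))" using R by (metis redm1)
  also have "\<dots> = ep ((r!0 + 1) # (r!2 + 2) # (r!4 + 1) # drop 5 r)"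
    by (simp only: ep_Cons[of "r!0+1"] redm1 mm_neg neg_neg) (simp add: algebra_simps)
  finally have "quiddity_cycle (red5_near c j)" using q qc by (simp add: red5_near_def r_def[symmetric])
  thus ?thesis using assms by (simp add: red5_near_def Let_def)
qed


lemma cdist_formula: "p < m \<Longrightarrow> q < m \<Longrightarrow> cdist m p q = (if p \<le> q then q - p else q + m - p)"
proof -
  assume a: "p < m" "q < m"
  show ?thesis
  proof (cases "p \<le> q")
    case True
    hence "q + m - p = (q - p) + m" by simp
    hence "cdist m p q = (q - p) mod m" by (simp add: cdist_def)
    thus ?thesis using True a by simp
  next
    case False thus ?thesis using a by (simp add: cdist_def)
  qed
qed

lemma pick: assumes "p < m" "q < m" "p \<noteq> q" "5 \<le> m"
  "\<not> (q = Suc p \<or> p = Suc q \<or> (Suc p = m \<and> q = 0) \<or> (Suc q = m \<and> p = 0))"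
  shows "(3 \<le> cdist m p q \<and> cdist m p q + 3 \<le> m) \<or> cdist m p q = 2 \<or> cdist m q p = 2"
proof (cases "p < q")
  case True
  hence "cdist m p q = q - p" "cdist m q p = p + m - q" using assms by (simp_all add: cdist_formula)
  thus ?thesis using assms True by auto
next
  case False
  hence "cdist m p q = q + m - p" "cdist m q p = p - q" using assms by (simp_all add: cdist_formula)
  thus ?thesis using assms False by auto
qed

lemma final_contra: assumes "xs \<noteq> []" "\<forall>x\<in>set xs. 2 \<le> \<bar>x\<bar>" "v = 0 \<or> v = -1"
  "ep (xs @ [v]) = I' \<or> ep (xs @ [v, v]) = I'"
  shows False
proof -
  obtain a b c d where E: "ep xs = M a b c d" by (cases "ep xs")
  have g: "\<bar>a\<bar> > \<bar>c\<bar>" "\<bar>c\<bar> \<ge> 1" using growth[OF assms(1,2) E] by auto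
  from assms(3) show False
  proof
    assume "v = 0"
    thus False using assms(4) E g by (auto simp: ep_append et_def I'_def)
  next
    assume "v = -1"
    thus False using assms(4) E g by (auto simp: ep_append et_def I'_def)
  qed
qed


lemma in_set_drop_idx: "x \<in> set (drop n c) \<Longrightarrow> \<exists>i. n \<le> i \<and> i < length c \<and> x = c!i"
proof -
  assume "x \<in> set (drop n c)"
  then obtain i where i: "i < length (drop n c)" "x = drop n c ! i" by (auto simp: in_set_conv_nth)
  hence "x = c!(n+i)" "n + i < length c" by auto
  thus ?thesis by (intro exI[of _ "n+i"]) simp
qed

lemma in_set_take_idx: "x \<in> set (take n c) \<Longrightarrow> \<exists>i<n. i < length c \<and> x = c!i"
  by (auto simp: in_set_conv_nth)

lemma conf1: assumes "ep c = I'" "p < length c" "c!p = v" "v = 0 \<or> v = -1" "2 \<le> length c"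
  "\<forall>i<length c. i \<noteq> p \<longrightarrow> 2 \<le> \<bar>c!i\<bar>"
  shows False
proof -
  define xs where "xs = drop (Suc p) c @ take p c"
  have "c = (take p c @ [v]) @ drop (Suc p) c" using assms id_take_nth_drop[OF assms(2)] by simp
  hence "ep (drop (Suc p) c @ (take p c @ [v])) = I'" using assms(1) by (metis ep_swap)
  hence "ep (xs @ [v]) = I'" by (simp add: xs_def)
  moreover have "length xs = length c - 1" using assms by (simp add: xs_def)
  hence "xs \<noteq> []" using assms by auto
  moreover have "\<forall>x\<in>set xs. 2 \<le> \<bar>x\<bar>"
  proof
    fix x assume "x \<in> set xs"
    hence "x \<in> set (drop (Suc p) c) \<or> x \<in> set (take p c)" by (simp add: xs_def)
    thus "2 \<le> \<bar>x\<bar>"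
    proof (elim disjE)
      assume "x \<in> set (drop (Suc p) c)" from in_set_drop_idx[OF this] obtain i where i: "Suc p \<le> i" "i < length c" "x = c!i" by blast
      hence "i \<noteq> p" by simp
      hence "2 \<le> \<bar>c!i\<bar>" using assms(6) i(2) by simp
      thus ?thesis using i(3) by simp
    next
      assume "x \<in> set (take p c)" from in_set_take_idx[OF this] obtain i where i: "i < p" "i < length c" "x = c!i" by blast
      hence "i \<noteq> p" by simp
      hence "2 \<le> \<bar>c!i\<bar>" using assms(6) i(2) by simp
      thus ?thesis using i(3) by simp
    qed
  qed
  ultimately show False using final_contra assms(4) by blast
qed

lemma conf2: assumes "ep c = I'" "Suc p < length c" "c!p = v" "c!Suc p = v" "v = 0 \<or> v = -1" "3 \<le> length c"
  "\<forall>i<length c. i \<noteq> p \<and> i \<noteq> Suc p \<longrightarrow> 2 \<le> \<bar>c!i\<bar>"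
  shows False
proof -
  define xs where "xs = drop (Suc (Suc p)) c @ take p c"
  have "c = take p c @ c!p # drop (Suc p) c" using assms by (intro id_take_nth_drop) simp
  moreover have "drop (Suc p) c = c!Suc p # drop (Suc (Suc p)) c" using Cons_nth_drop_Suc[OF assms(2), symmetric] .
  ultimately have "c = (take p c @ [v, v]) @ drop (Suc (Suc p)) c" using assms by simp
  hence "ep (drop (Suc (Suc p)) c @ (take p c @ [v, v])) = I'" using assms(1) by (metis ep_swap)
  hence "ep (xs @ [v, v]) = I'" by (simp add: xs_def)
  moreover have "length xs = length c - 2" using assms by (simp add: xs_def)
  hence "xs \<noteq> []" using assms by auto
  moreover have "\<forall>x\<in>set xs. 2 \<le> \<bar>x\<bar>"
  proof
    fix x assume "x \<in> set xs"
    hence "x \<in> set (drop (Suc (Suc p)) c) \<or> x \<in> set (take p c)" by (simp add: xs_def)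
    thus "2 \<le> \<bar>x\<bar>"
    proof (elim disjE)
      assume "x \<in> set (drop (Suc (Suc p)) c)" from in_set_drop_idx[OF this] obtain i where i: "Suc (Suc p) \<le> i" "i < length c" "x = c!i" by blast
      hence "i \<noteq> p \<and> i \<noteq> Suc p" by simp
      hence "2 \<le> \<bar>c!i\<bar>" using assms(7) i(2) by simp
      thus ?thesis using i(3) by simp
    next
      assume "x \<in> set (take p c)" from in_set_take_idx[OF this] obtain i where i: "i < p" "i < length c" "x = c!i" by blast
      hence "i \<noteq> p \<and> i \<noteq> Suc p" by simp
      hence "2 \<le> \<bar>c!i\<bar>" using assms(7) i(2) by simp
      thus ?thesis using i(3) by simp
    qed
  qed
  ultimately show False using final_contra assms(5) by blast
qed

lemma conf3: assumes "ep c = I'" "c!0 = v" "c!(length c - 1) = v" "v = 0 \<or> v = -1" "3 \<le> length c"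
  "\<forall>i<length c. 0 < i \<and> i < length c - 1 \<longrightarrow> 2 \<le> \<bar>c!i\<bar>"
  shows False
proof -
  define m where "m = length c"
  define xs where "xs = take (m - 2) (drop 1 c)"
  have "Suc (m - 2) = m - 1" using assms(5) m_def by simp
  hence "drop (m - 2) (drop 1 c) = drop (m - 1) c" by (simp add: drop_drop)
  hence d1: "drop 1 c = xs @ drop (m - 1) c" unfolding xs_def by (metis append_take_drop_id)
  have lt: "m - 1 < length c" using assms(5) m_def by simp
  have e: "Suc (m - 1) = m" using assms(5) m_def by simp
  have "c!(m-1) # drop (Suc (m-1)) c = drop (m-1) c" using Cons_nth_drop_Suc[OF lt] .
  hence d2: "drop (m - 1) c = [v]" unfolding e using assms m_def by simp
  have "c = c!0 # drop 1 c" using assms by (cases c) auto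
  hence "c = [v] @ (xs @ [v])" using d1 d2 assms by simp
  hence "ep ((xs @ [v]) @ [v]) = I'" using assms(1) ep_swap by metis
  hence "ep (xs @ [v, v]) = I'" by simp
  moreover have "length xs = m - 2" using assms(5) m_def by (simp add: xs_def)
  hence "xs \<noteq> []" using assms(5) m_def by auto
  moreover have "\<forall>x\<in>set xs. 2 \<le> \<bar>x\<bar>"
  proof
    fix x assume "x \<in> set xs"
    hence "x \<in> set (take (m - 2) (drop 1 c))" by (simp add: xs_def)
    from in_set_take_idx[OF this] obtain i where "i < m - 2" "i < length (drop 1 c)" "x = drop 1 c ! i"
      by blast
    hence "x = c ! Suc i" "0 < Suc i" "Suc i < length c - 1" "Suc i < length c" using m_def by auto
    thus "2 \<le> \<bar>x\<bar>" using assms(6) by simp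
  qed
  ultimately show False using final_contra assms(4) by blast
qed



definition adjc :: "nat \<Rightarrow> nat \<Rightarrow> nat \<Rightarrow> bool" where
  "adjc m p q \<longleftrightarrow> (q = Suc p \<or> p = Suc q \<or> (Suc p = m \<and> q = 0) \<or> (Suc q = m \<and> p = 0))"

lemma pick2: "p < m \<Longrightarrow> q < m \<Longrightarrow> p \<noteq> q \<Longrightarrow> 5 \<le> m \<Longrightarrow> \<not> adjc m p q \<Longrightarrow>
  (3 \<le> cdist m p q \<and> cdist m p q + 3 \<le> m) \<or> cdist m p q = 2 \<or> cdist m q p = 2"
  unfolding adjc_def by (rule pick)

lemma len2: "length c = 2 \<Longrightarrow> \<exists>a b. c = [a, b]"
  by (cases c; cases "tl c") (auto simp: numeral_eq_Suc)
lemma len3: "length c = 3 \<Longrightarrow> \<exists>a b d. c = [a, b, d]"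
  by (cases c; cases "tl c"; cases "tl (tl c)") (auto simp: numeral_eq_Suc)
lemma len4: "length c = 4 \<Longrightarrow> \<exists>a b d e. c = [a, b, d, e]"
  by (cases c; cases "tl c"; cases "tl (tl c)"; cases "tl (tl (tl c))") (auto simp: numeral_eq_Suc)

lemma m0: "\<not> quiddity_cycle []" by (simp add: qc I'_def)
lemma m1: "\<not> quiddity_cycle [a]" by (simp add: qc I'_def et_def)
lemma m2: "quiddity_cycle [a, b] \<Longrightarrow> a = 0 \<and> b = 0" by (simp add: qc I'_def et_def)
lemma m3: assumes "quiddity_cycle [a, b, d]" shows "a = 1 \<and> b = 1 \<and> d = 1"
  using assms apply (simp add: qc I'_def et_def algebra_simps)
  apply (elim conjE)
  apply hypsubst
  apply simp
  done
lemma m4lem: assumes "quiddity_cycle [a, b, d, e]" shows "\<bar>b\<bar> = 1 \<or> \<bar>d\<bar> = 1"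
proof -
  have "b * d = 2" using assms by (simp add: qc I'_def et_def algebra_simps)
  hence "\<bar>b\<bar> * \<bar>d\<bar> = 2" by (metis abs_mult abs_numeral)
  moreover have "\<bar>b\<bar> \<ge> 0" "\<bar>d\<bar> \<ge> 0" by auto
  ultimately show ?thesis
  proof -
    assume p: "\<bar>b\<bar> * \<bar>d\<bar> = 2"
    have "\<bar>b\<bar> \<le> 1 \<or> \<bar>d\<bar> \<le> 1"
    proof (rule ccontr)
      assume "\<not> ?thesis"
      hence "2 * 2 \<le> \<bar>b\<bar> * \<bar>d\<bar>" by (intro mult_mono) auto
      thus False using p by simp
    qed
    moreover have "\<bar>b\<bar> \<noteq> 0" "\<bar>d\<bar> \<noteq> 0" using p by auto
    ultimately show ?thesis by auto
  qed
qed

theorem theorem6p4: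
  fixes c :: "int list"
  defines "m \<equiv> length c"
  assumes "quiddity_cycle c"
  shows "(m < 4 \<and> c \<in> {[0, 0], [1, 1, 1]})
    \<or> (\<exists>k<m. c!k = 1 \<and> quiddity_cycle (red1 c k) \<and> length (red1 c k) = m - 1)
    \<or> (odd m \<and> (\<exists>k<m. c!k = 0 \<and> quiddity_cycle (red2 c k) \<and> length (red2 c k) = m - 2))
    \<or> (even m \<and> (\<exists>k<m. c!k = -1 \<and> quiddity_cycle (red3 c k) \<and> length (red3 c k) = m - 1))
    \<or> (\<exists>j<m. \<exists>k<m. c!j = 0 \<and> c!k = 0 \<and>
         ((3 \<le> cdist m j k \<and> cdist m j k + 3 \<le> m \<and> quiddity_cycle (red4_far c j k)
             \<and> length (red4_far c j k) = m - 4)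
          \<or> (cdist m j k = 2 \<and> 5 \<le> m \<and> quiddity_cycle (red4_near c j)
             \<and> length (red4_near c j) = m - 4)))
    \<or> (\<exists>j<m. \<exists>k<m. c!j = -1 \<and> c!k = -1 \<and>
         ((3 \<le> cdist m j k \<and> cdist m j k + 3 \<le> m \<and> quiddity_cycle (red5_far c j k)
             \<and> length (red5_far c j k) = m - 2)
          \<or> (cdist m j k = 2 \<and> 5 \<le> m \<and> quiddity_cycle (red5_near c j)
             \<and> length (red5_near c j) = m - 2)))"

proof -
  note q = \<open>quiddity_cycle c\<close>
  have E: "ep c = I'" using q qc by simp
  have mlen: "m = length c" using m_def by simp
  show ?thesis
  proof (cases "m < 4")
    case True
    then consider "m = 0" | "m = 1" | "m = 2" | "m = 3" by linarith
    thus ?thesis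
    proof cases
      case 1 thus ?thesis using q m0 mlen by simp
    next
      case 2 then obtain a where "c = [a]" using mlen by (cases c) auto
      thus ?thesis using q m1 by simp
    next
      case 3 then obtain a b where "c = [a, b]" using mlen len2 by metis
      thus ?thesis using q m2 3 by simp
    next
      case 4 then obtain a b d where "c = [a, b, d]" using mlen len3 by metis
      thus ?thesis using q m3 4 by simp
    qed
  next
    case False
    hence m4: "4 \<le> m" by simp
    show ?thesis
    proof (cases "\<exists>k<m. c!k = 1")
      case True
      then obtain k where "k < m" "c!k = 1" by blast
      thus ?thesis using L1[OF q] m4 mlen by auto
    next
      case h1: False
      show ?thesis
      proof (cases "odd m \<and> (\<exists>k<m. c!k = 0)")
        case True
        then obtain k where "k < m" "c!k = 0" by blast
        thus ?thesis using L2[OF q] m4 mlen True by auto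
      next
        case h2: False
        show ?thesis
        proof (cases "even m \<and> (\<exists>k<m. c!k = -1)")
          case True
          then obtain k where "k < m" "c!k = -1" by blast
          thus ?thesis using L3[OF q] m4 mlen True by auto
        next
          case h3: False
          have m5: "5 \<le> m"
          proof (rule ccontr)
            assume "\<not> 5 \<le> m"
            hence m4': "m = 4" using m4 by simp
            then obtain a b d e where ce: "c = [a, b, d, e]" using mlen len4 by metis
            hence "\<bar>b\<bar> = 1 \<or> \<bar>d\<bar> = 1" using m4lem[of a b d e] q by simp
            hence "b = 1 \<or> b = -1 \<or> d = 1 \<or> d = -1" by auto
            moreover have "c!1 = b" "c!2 = d" using ce by auto
            ultimately show False using h1 h3 m4' by force
          qed
          define v where "v = (if even m then (0::int) else -1)"
          have vv: "v = 0 \<or> v = -1" by (simp add: v_def)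
          have big: "\<forall>i<m. c!i \<noteq> v \<longrightarrow> 2 \<le> \<bar>c!i\<bar>"
          proof (intro allI impI)
            fix i assume i: "i < m" "c!i \<noteq> v"
            have "c!i \<noteq> 1" using h1 i by blast
            moreover have "c!i \<noteq> 0" using h2 i v_def by (cases "even m") auto
            moreover have "c!i \<noteq> -1" using h3 i v_def by (cases "even m") auto
            ultimately show "2 \<le> \<bar>c!i\<bar>" by auto
          qed
          show ?thesis
          proof (cases "\<exists>p<m. \<exists>q<m. c!p = v \<and> c!q = v \<and> p \<noteq> q \<and> \<not> adjc m p q")
            case True
            then obtain p r where pr: "p < m" "r < m" "c!p = v" "c!r = v" "p \<noteq> r"
              "\<not> adjc m p r" by auto
            have pk: "(3 \<le> cdist m p r \<and> cdist m p r + 3 \<le> m) \<or> cdist m p r = 2 \<or> cdist m r p = 2"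
              using pick2[OF pr(1,2,5) m5 pr(6)] .
            show ?thesis
            proof (cases "even m")
              case True
              hence z: "c!p = 0" "c!r = 0" using pr(3,4) v_def by simp_all
              have D4: "\<exists>j<m. \<exists>k<m. c!j = 0 \<and> c!k = 0 \<and>
         ((3 \<le> cdist m j k \<and> cdist m j k + 3 \<le> m \<and> quiddity_cycle (red4_far c j k)
             \<and> length (red4_far c j k) = m - 4)
          \<or> (cdist m j k = 2 \<and> 5 \<le> m \<and> quiddity_cycle (red4_near c j)
             \<and> length (red4_near c j) = m - 4))"
                using pk
              proof (elim disjE)
                assume a: "3 \<le> cdist m p r \<and> cdist m p r + 3 \<le> m"
                show ?thesis
                  apply (rule exI[of _ p], rule conjI, rule pr)
                  apply (rule exI[of _ r], rule conjI, rule pr)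
                  using L4far[OF q _ _ z] a pr mlen m5 z by auto
              next
                assume a: "cdist m p r = 2"
                show ?thesis
                  apply (rule exI[of _ p], rule conjI, rule pr)
                  apply (rule exI[of _ r], rule conjI, rule pr)
                  using L4near[OF q _ _ z] a pr mlen m5 z by auto
              next
                assume a: "cdist m r p = 2"
                show ?thesis
                  apply (rule exI[of _ r], rule conjI, rule pr)
                  apply (rule exI[of _ p], rule conjI, rule pr)
                  using L4near[OF q _ _ z(2,1)] a pr mlen m5 z by auto
              qed
              show ?thesis by (rule disjI2, rule disjI2, rule disjI2, rule disjI2, rule disjI1, rule D4)
            next
              case False
              hence z: "c!p = -1" "c!r = -1" using pr(3,4) v_def by simp_all
              have D5: "\<exists>j<m. \<exists>k<m. c!j = -1 \<and> c!k = -1 \<and>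
         ((3 \<le> cdist m j k \<and> cdist m j k + 3 \<le> m \<and> quiddity_cycle (red5_far c j k)
             \<and> length (red5_far c j k) = m - 2)
          \<or> (cdist m j k = 2 \<and> 5 \<le> m \<and> quiddity_cycle (red5_near c j)
             \<and> length (red5_near c j) = m - 2))"
                using pk
              proof (elim disjE)
                assume a: "3 \<le> cdist m p r \<and> cdist m p r + 3 \<le> m"
                show ?thesis
                  apply (rule exI[of _ p], rule conjI, rule pr)
                  apply (rule exI[of _ r], rule conjI, rule pr)
                  using L5far[OF q _ _ z] a pr mlen m5 z by auto
              next
                assume a: "cdist m p r = 2"
                show ?thesis
                  apply (rule exI[of _ p], rule conjI, rule pr)
                  apply (rule exI[of _ r], rule conjI, rule pr)
                  using L5near[OF q _ _ z] a pr mlen m5 z by auto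
              next
                assume a: "cdist m r p = 2"
                show ?thesis
                  apply (rule exI[of _ r], rule conjI, rule pr)
                  apply (rule exI[of _ p], rule conjI, rule pr)
                  using L5near[OF q _ _ z(2,1)] a pr mlen m5 z by auto
              qed
              show ?thesis by (rule disjI2, rule disjI2, rule disjI2, rule disjI2, rule disjI2, rule D5)
            qed
          next
            case False
            have H: "\<And>p r. p < m \<Longrightarrow> r < m \<Longrightarrow> c!p = v \<Longrightarrow> c!r = v \<Longrightarrow> p \<noteq> r \<Longrightarrow>
                  (r = Suc p \<or> p = Suc r \<or> (Suc p = m \<and> r = 0) \<or> (Suc r = m \<and> p = 0))"
            proof -
              fix p r assume "p < m" "r < m" "c!p = v" "c!r = v" "p \<noteq> r"
              hence "adjc m p r" using False by blast
              thus "r = Suc p \<or> p = Suc r \<or> (Suc p = m \<and> r = 0) \<or> (Suc r = m \<and> p = 0)" by (simp add: adjc_def)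
            qed
            have False
            proof (cases "\<exists>p<m. c!p = v")
              case False
              hence "\<forall>x\<in>set c. 2 \<le> \<bar>x\<bar>" using big mlen by (auto simp: in_set_conv_nth)
              moreover have "c \<noteq> []" using mlen m4 by auto
              ultimately show False using growth[of c _ _ _ _] E by (auto simp: I'_def)
            next
              case True
              then obtain p where p: "p < m" "c!p = v" by blast
              consider "Suc p < m \<and> c!Suc p = v" | "0 < p \<and> c!(p-1) = v" | "Suc p = m \<and> c!0 = v"
                | "p = 0 \<and> c!(m-1) = v"
                | "\<not> (Suc p < m \<and> c!Suc p = v)" "\<not> (0 < p \<and> c!(p-1) = v)" "\<not> (Suc p = m \<and> c!0 = v)"
                  "\<not> (p = 0 \<and> c!(m-1) = v)" by blast
              thus False
              proof cases
                case 1
                have "\<forall>i<length c. i \<noteq> p \<and> i \<noteq> Suc p \<longrightarrow> 2 \<le> \<bar>c!i\<bar>"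
                proof (intro allI impI)
                  fix i assume i: "i < length c" "i \<noteq> p \<and> i \<noteq> Suc p"
                  show "2 \<le> \<bar>c!i\<bar>"
                  proof (cases "c!i = v")
                    case True
                    have "Suc p \<noteq> i" "p \<noteq> i" using i by auto
                    from H[OF p(1) _ p(2) True this(2)] H[of "Suc p" i] 1 i True mlen m5
                    show ?thesis by auto
                  next
                    case False thus ?thesis using big i mlen by auto
                  qed
                qed
                thus False using conf2[OF E _ p(2) _ vv] 1 mlen m4 by auto
              next
                case 2
                have "\<forall>i<length c. i \<noteq> p - 1 \<and> i \<noteq> Suc (p - 1) \<longrightarrow> 2 \<le> \<bar>c!i\<bar>"
                proof (intro allI impI)
                  fix i assume i: "i < length c" "i \<noteq> p - 1 \<and> i \<noteq> Suc (p - 1)"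
                  show "2 \<le> \<bar>c!i\<bar>"
                  proof (cases "c!i = v")
                    case True
                    have "p - 1 < m" using p by simp
                    from H[OF p(1) _ p(2) True] H[OF this _ _ True, of ] 2 i True mlen m5 p
                    show ?thesis by auto
                  next
                    case False thus ?thesis using big i mlen by auto
                  qed
                qed
                moreover have "Suc (p - 1) = p" using 2 by simp
                ultimately show False using conf2[OF E _ _ _ vv, of "p - 1"] 2 p mlen m4 by auto
              next
                case 3
                have "\<forall>i<length c. 0 < i \<and> i < length c - 1 \<longrightarrow> 2 \<le> \<bar>c!i\<bar>"
                proof (intro allI impI)
                  fix i assume i: "i < length c" "0 < i \<and> i < length c - 1"
                  show "2 \<le> \<bar>c!i\<bar>"
                  proof (cases "c!i = v")
                    case True
                    have i0: "0 < m" "c!0 = v" "i < m" "0 \<noteq> i" "p \<noteq> i" using 3 i mlen by auto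
                    have A1: "i = Suc p \<or> p = Suc i \<or> (Suc p = m \<and> i = 0) \<or> (Suc i = m \<and> p = 0)"
                      using H[OF p(1) i0(3) p(2) True i0(5)] by blast
                    have A2: "i = Suc 0 \<or> 0 = Suc i \<or> (Suc 0 = m \<and> i = 0) \<or> (Suc i = m \<and> 0 = 0)"
                      using H[OF i0(1) i0(3) i0(2) True i0(4)] by blast
                    have False using A1 A2 3 i mlen m5 by linarith
                    thus ?thesis ..
                  next
                    case False thus ?thesis using big i mlen by auto
                  qed
                qed
                moreover have "length c - 1 = p" using 3 mlen by linarith
                hence "c!(length c - 1) = v" using p by simp
                ultimately show False using conf3[OF E _ _ vv] 3 mlen m4 by auto
              next
                case 4
                have "\<forall>i<length c. 0 < i \<and> i < length c - 1 \<longrightarrow> 2 \<le> \<bar>c!i\<bar>"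
                proof (intro allI impI)
                  fix i assume i: "i < length c" "0 < i \<and> i < length c - 1"
                  show "2 \<le> \<bar>c!i\<bar>"
                  proof (cases "c!i = v")
                    case True
                    have i0: "m - 1 < m" "c!(m - 1) = v" "i < m" "m - 1 \<noteq> i" "p \<noteq> i" using 4 i mlen m5 by auto
                    have A1: "i = Suc p \<or> p = Suc i \<or> (Suc p = m \<and> i = 0) \<or> (Suc i = m \<and> p = 0)"
                      using H[OF p(1) i0(3) p(2) True i0(5)] by blast
                    have A2: "i = Suc (m - 1) \<or> m - 1 = Suc i \<or> (Suc (m - 1) = m \<and> i = 0) \<or> (Suc i = m \<and> m - 1 = 0)"
                      using H[OF i0(1) i0(3) i0(2) True i0(4)] by blast
                    have False using A1 A2 4 i mlen m5 by linarith
                    thus ?thesis ..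
                  next
                    case False thus ?thesis using big i mlen by auto
                  qed
                qed
                thus False using conf3[OF E _ _ vv] 4 p mlen m4 by auto
              next
                case 5
                have "\<forall>i<length c. i \<noteq> p \<longrightarrow> 2 \<le> \<bar>c!i\<bar>"
                proof (intro allI impI)
                  fix i assume i: "i < length c" "i \<noteq> p"
                  show "2 \<le> \<bar>c!i\<bar>"
                  proof (cases "c!i = v")
                    case True
                    have A1: "i = Suc p \<or> p = Suc i \<or> (Suc p = m \<and> i = 0) \<or> (Suc i = m \<and> p = 0)"
                      using H[OF p(1) _ p(2) True] i mlen by auto
                    have False
                    proof -
                      consider "i = Suc p" | "p = Suc i" | "Suc p = m \<and> i = 0" | "Suc i = m \<and> p = 0"
                        using A1 by blast
                      thus False
                      proof cases
                        case 1 thus False using 5 True i mlen by auto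
                      next
                        case 2 hence "0 < p \<and> i = p - 1" by linarith
                        thus False using 5 True by auto
                      next
                        case 3 thus False using 5 True by auto
                      next
                        case 4 hence "p = 0 \<and> i = m - 1" by linarith
                        thus False using 5 True by auto
                      qed
                    qed
                    thus ?thesis ..
                  next
                    case False thus ?thesis using big i mlen by auto
                  qed
                qed
                thus False using conf1[OF E _ p(2) vv] p mlen m4 by auto
              qed
            qed
            thus ?thesis ..
          qed
        qed
      qed
    qed
  qed
qed

end
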